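(* Let $a,n,r\in\mathbb{N}$ (so $r\ge1$), $k_1,\ldots,k_n\in\mathbb{N}$, and let $g_1,\ldots,g_n$ be arbitrary arithmetic functions. Then $$\frac{1}{K^{ar}}\sum_{j=1}^{K^a} j^r\prod_{i=1}^n\Bigl(\sum_{d_i|k_i,\ d_i^a|j}(g_i*\mu)\Bigl(\frac{k_i}{d_i}\Bigr)\Bigr)=\frac12\prod_{i=1}^n g_i(k_i)+\frac{1}{r+1}\sum_{m=0}^{\lfloor r/2\rfloor}\binom{r+1}{2m}\frac{B_{2m}}{K^{a(2m-1)}}\sum_{d_1|k_1,\ldots,d_n|k_n}\bigl(\operatorname{lcm}(d_1,\ldots,d_n)\bigr)^{a(2m-1)}\prod_{i=1}^n (g_i*\mu)\Bigl(\frac{k_i}{d_i}\Bigr).$$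
   Context: An arithmetic function is a map $\mathbb{N}\to\mathbb{C}$; $\mu$ is the Möbius function and $(f*g)(n)=\sum_{d|n}f(d)g(n/d)$ the Dirichlet convolution. $K=\operatorname{lcm}(k_1,\ldots,k_n)$. The Bernoulli numbers $B_m$ are defined by $\frac{t}{e^t-1}=\sum_{m\ge0}B_m\frac{t^m}{m!}$. *)

theory Defs
  imports "HOL-Computational_Algebra.Computational_Algebra"
begin

definition moebius :: "nat \<Rightarrow> complex" where
  "moebius n = (if n = 0 \<or> \<not> squarefree n then 0
               else (-1) ^ card (prime_factors n))"

definition dconv :: "(nat \<Rightarrow> complex) \<Rightarrow> (nat \<Rightarrow> complex) \<Rightarrow> nat \<Rightarrow> complex" where
  "dconv f g n = (\<Sum>d | d dvd n. f d * g (n div d))"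

definition bernoulli :: "nat \<Rightarrow> real" where
  "bernoulli m = fact m * fps_nth (fps_X / (fps_exp 1 - 1)) m"

end

theory Submission
  imports Defs
begin






lemma pf_prod_primes:
  fixes S :: "nat set"
  assumes "finite S" "\<And>p. p \<in> S \<Longrightarrow> prime p"
  shows "prime_factorization (\<Prod>S) = mset_set S"
proof -
  have "\<Prod>S = prod_mset (mset_set S)" by (simp add: prod_unfold_prod_mset)
  moreover have "prime_factorization (prod_mset (mset_set S)) = mset_set S"
    by (rule prime_factorization_prod_mset_primes) (use assms in auto)
  ultimately show ?thesis by simp
qed

lemma squarefree_pf:
  fixes d :: nat
  assumes "squarefree d"
  shows "prime_factorization d = mset_set (prime_factors d)"
proof (rule multiset_eqI)
  fix p
  have d0: "d \<noteq> 0" using assms by (metis not_squarefree_0)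
  show "count (prime_factorization d) p = count (mset_set (prime_factors d)) p"
  proof (cases "prime p")
    case True
    hence "multiplicity p d \<le> 1" using assms d0 squarefree_factorial_semiring'' by blast
    hence "multiplicity p d = 0 \<or> multiplicity p d = 1" by auto
    moreover have "finite {p. prime p \<and> 0 < multiplicity p d}"
      using finite_set_mset[of "prime_factorization d"] d0 by (simp add: prime_factors_multiplicity)
    ultimately show ?thesis using True d0 by (auto simp: count_prime_factorization prime_factors_multiplicity)
  next
    case False thus ?thesis by (auto simp: count_prime_factorization count_mset_set)
  qed
qed

lemma squarefree_eq_prod:
  fixes d :: nat
  assumes "squarefree d"
  shows "\<Prod>(prime_factors d) = d"
proof -
  have d0: "d > 0" using assms by (metis not_squarefree_0 gr0I)
  have "d = prod_mset (prime_factorization d)" using d0 by simp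
  also have "\<dots> = prod_mset (mset_set (prime_factors d))" using squarefree_pf[OF assms] by simp
  also have "\<dots> = \<Prod>(prime_factors d)" by (simp add: prod_unfold_prod_mset)
  finally show ?thesis by simp
qed

lemma alt_pow_sum:
  assumes "finite P" "P \<noteq> {}"
  shows "(\<Sum>S\<in>Pow P. (-1::complex) ^ card S) = 0"
proof -
  obtain p where p: "p \<in> P" using assms by auto
  define Q where "Q = P - {p}"
  have P: "P = insert p Q" and pQ: "p \<notin> Q" and fQ: "finite Q" using p assms by (auto simp: Q_def)
  have "Pow P = Pow Q \<union> insert p ` Pow Q" unfolding P by (rule Pow_insert)
  moreover have "Pow Q \<inter> insert p ` Pow Q = {}" using pQ by auto
  ultimately have "(\<Sum>S\<in>Pow P. (-1::complex) ^ card S) =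
     (\<Sum>S\<in>Pow Q. (-1::complex) ^ card S) + (\<Sum>S\<in>insert p ` Pow Q. (-1::complex) ^ card S)"
    using fQ by (simp add: sum.union_disjoint)
  also have "(\<Sum>S\<in>insert p ` Pow Q. (-1::complex) ^ card S) = (\<Sum>S\<in>Pow Q. (-1::complex) ^ card (insert p S))"
  proof -
    have "inj_on (insert p) (Pow Q)"
    proof (rule inj_onI)
      fix S T assume "S \<in> Pow Q" "T \<in> Pow Q" "insert p S = insert p T"
      hence "insert p S - {p} = insert p T - {p}" "p \<notin> S" "p \<notin> T" using pQ by auto
      thus "S = T" by simp
    qed
    thus ?thesis by (simp add: sum.reindex)
  qed
  also have "\<dots> = (\<Sum>S\<in>Pow Q. - ((-1::complex) ^ card S))"
  proof (rule sum.cong)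
    fix S assume "S \<in> Pow Q"
    hence "finite S" "p \<notin> S" using pQ fQ finite_subset by auto
    thus "(-1::complex) ^ card (insert p S) = - ((-1) ^ card S)" by simp
  qed simp
  finally show ?thesis by (simp add: sum_negf)
qed

lemma moebius_sum:
  fixes m :: nat
  assumes "m \<ge> 1"
  shows "(\<Sum>d | d dvd m. moebius d) = (if m = 1 then 1 else 0)"
proof -
  have fin: "finite {d. d dvd m}" using assms by (simp add: finite_divisors_nat)
  have "(\<Sum>d | d dvd m. moebius d) = (\<Sum>d\<in>{d. d dvd m \<and> squarefree d}. (-1) ^ card (prime_factors d))"
    using fin by (intro sum.mono_neutral_cong_right) (auto simp: moebius_def intro: gr0I)
  also have "\<dots> = (\<Sum>S\<in>Pow (prime_factors m). (-1) ^ card (prime_factors (\<Prod>S)))"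
  proof (rule sum.reindex_bij_witness[where i = "\<lambda>S. \<Prod>S" and j = "prime_factors"])
    fix S assume S: "S \<in> Pow (prime_factors m)"
    hence fS: "finite S" using finite_subset by blast
    have pS: "\<And>p. p \<in> S \<Longrightarrow> prime p" using S by auto
    have pf: "prime_factorization (\<Prod>S) = mset_set S" by (rule pf_prod_primes[OF fS pS])
    show "prime_factors (\<Prod>S) = S" using pf fS by simp
    have m0: "m \<noteq> 0" using assms by auto
    have P0: "\<Prod>S \<noteq> 0" using pS fS by (metis not_prime_0 prod_zero_iff)
    have "mset_set S \<subseteq># prime_factorization m" 
    proof (rule mset_subset_eqI)
      fix x show "count (mset_set S) x \<le> count (prime_factorization m) x"
      proof (cases "x \<in> S")
        case True
        hence "x \<in># prime_factorization m" using S by auto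
        hence "0 < count (prime_factorization m) x" by simp
        thus ?thesis using True fS by simp
      qed (simp add: count_mset_set)
    qed
    hence "prime_factorization (\<Prod>S) \<subseteq># prime_factorization m" using pf by simp
    hence "\<Prod>S dvd m" using prime_factorization_subset_iff_dvd[OF P0 m0] by simp
    moreover have "squarefree (\<Prod>S)"
    proof (subst squarefree_factorial_semiring''[OF P0], intro allI impI)
      fix p :: nat assume "prime p"
      hence "multiplicity p (\<Prod>S) = count (mset_set S) p"
        using count_prime_factorization[of "\<Prod>S" p] by (simp add: pf)
      thus "multiplicity p (\<Prod>S) \<le> 1" using fS by (cases "p \<in> S") (simp_all add: count_mset_set)
    qed
    ultimately show "\<Prod>S \<in> {d. d dvd m \<and> squarefree d}" by simp
  next
    fix d assume d: "d \<in> {d. d dvd m \<and> squarefree d}"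
    thus "\<Prod>(prime_factors d) = d" by (simp add: squarefree_eq_prod)
    show "prime_factors d \<in> Pow (prime_factors m)" using d assms
      using dvd_prime_factors[of m d] by auto
    show "(-1) ^ card (prime_factors (\<Prod>(prime_factors d))) = (-1::complex) ^ card (prime_factors d)"
      using d by (simp add: squarefree_eq_prod)
  qed
  also have "\<dots> = (\<Sum>S\<in>Pow (prime_factors m). (-1) ^ card S)"
  proof (intro sum.cong refl)
    fix S assume S: "S \<in> Pow (prime_factors m)"
    hence fS: "finite S" using finite_subset by blast
    have pS: "\<And>p. p \<in> S \<Longrightarrow> prime p" using S by auto
    show "(-1) ^ card (prime_factors (\<Prod>S)) = (-1) ^ card S"
      using pf_prod_primes[OF fS pS] fS by simp
  qed
  also have "\<dots> = (if m = 1 then 1 else 0)"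
  proof (cases "m = 1")
    case False
    then obtain p where "prime p" "p dvd m" using prime_factor_nat by blast
    then have "p \<in> prime_factors m" using assms by (auto intro: prime_factorsI)
    then have "prime_factors m \<noteq> {}" by auto
    thus ?thesis using False alt_pow_sum[of "prime_factors m"] by simp
  qed simp
  finally show ?thesis .
qed


lemma div_div_self_nat:
  fixes e k :: nat assumes "e dvd k" "k > 0" shows "k div (k div e) = e"
  using assms by (metis dvd_mult_div_cancel dvd_div_mult_self nonzero_mult_div_cancel_left
        dvd_div_eq_0_iff not_gr0 div_mult_self1_is_m)

lemma sum_divisors_compl:
  fixes k :: nat assumes "k > 0"
  shows "(\<Sum>e | e dvd k. F (k div e)) = (\<Sum>e | e dvd k. F e)"
  by (rule sum.reindex_bij_witness[where i = "\<lambda>e. k div e" and j = "\<lambda>e. k div e"])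
     (use assms in \<open>auto simp: div_div_self_nat intro: div_dvd_div\<close>)

lemma moebius_inv:
  fixes k :: nat assumes "k \<ge> 1"
  shows "(\<Sum>e | e dvd k. dconv g moebius (k div e)) = g k"
proof -
  have k0: "k > 0" using assms by simp
  have fin: "\<And>m::nat. m > 0 \<Longrightarrow> finite {d. d dvd m}" by (simp add: finite_divisors_nat)
  have "(\<Sum>e | e dvd k. dconv g moebius (k div e)) = (\<Sum>e | e dvd k. dconv g moebius e)"
    by (rule sum_divisors_compl[OF k0])
  also have "\<dots> = (\<Sum>e | e dvd k. \<Sum>c | c dvd e. g c * moebius (e div c))"
    by (simp add: dconv_def)
  also have "\<dots> = (\<Sum>(e,c) \<in> Sigma {e. e dvd k} (\<lambda>e. {c. c dvd e}). g c * moebius (e div c))"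
    by (rule sum.Sigma) (use k0 fin in \<open>auto intro!: fin dest: dvd_imp_le intro: gr0I\<close>)
  also have "\<dots> = (\<Sum>(c,u) \<in> Sigma {c. c dvd k} (\<lambda>c. {u. u dvd k div c}). g c * moebius u)"
  proof (rule sum.reindex_bij_witness[where i = "\<lambda>(c,u). (c*u, c)" and j = "\<lambda>(e,c). (c, e div c)"])
    fix x assume x: "x \<in> Sigma {e. e dvd k} (\<lambda>e. {c. c dvd e})"
    obtain e c where [simp]: "x = (e,c)" by (cases x)
    from x have ek: "e dvd k" and ce: "c dvd e" by auto
    show "(case case x of (e, c) \<Rightarrow> (c, e div c) of (c, u) \<Rightarrow> (c * u, c)) = x"
      using ce by simp
    show "(case x of (e, c) \<Rightarrow> (c, e div c)) \<in> Sigma {c. c dvd k} (\<lambda>c. {u. u dvd k div c})"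
      using ek ce by (auto intro: dvd_trans div_dvd_div)
    show "(case case x of (e, c) \<Rightarrow> (c, e div c) of (c, u) \<Rightarrow> g c * moebius u) =
          (case x of (e, c) \<Rightarrow> g c * moebius (e div c))" by simp
  next
    fix y assume y: "y \<in> Sigma {c. c dvd k} (\<lambda>c. {u. u dvd k div c})"
    obtain c u where [simp]: "y = (c,u)" by (cases y)
    from y have ck: "c dvd k" and uk: "u dvd k div c" by auto
    have c0: "c > 0" using ck k0 by (auto intro: gr0I)
    show "(case case y of (c, u) \<Rightarrow> (c * u, c) of (e, c) \<Rightarrow> (c, e div c)) = y"
      using c0 by simp
    show "(case y of (c, u) \<Rightarrow> (c * u, c)) \<in> Sigma {e. e dvd k} (\<lambda>e. {c. c dvd e})"
    proof -
      have "c * u dvd c * (k div c)" using uk by simp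
      hence "c * u dvd k" using ck by (simp add: dvd_mult_div_cancel)
      thus ?thesis by simp
    qed
  qed
  also have "\<dots> = (\<Sum>c | c dvd k. g c * (\<Sum>u | u dvd k div c. moebius u))"
    by (subst sum.Sigma[symmetric]) (use k0 fin in \<open>auto simp: sum_distrib_left intro!: fin\<close>)
  also have "\<dots> = (\<Sum>c | c dvd k. if c = k then g k else 0)"
  proof (rule sum.cong[OF refl])
    fix c assume "c \<in> {c. c dvd k}"
    hence ck: "c dvd k" by simp
    have "k div c \<ge> 1" using ck k0 by (metis dvd_div_eq_0_iff not_less_eq_eq le0 One_nat_def neq0_conv
         less_one linorder_not_le div_by_0 gr0I)
    moreover have "k div c = 1 \<longleftrightarrow> c = k" using ck k0
      by (metis div_self dvd_mult_div_cancel mult.right_neutral not_gr0)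
    ultimately show "g c * (\<Sum>u | u dvd k div c. moebius u) = (if c = k then g k else 0)"
      by (simp add: moebius_sum)
  qed
  also have "\<dots> = g k" using k0 by (simp add: sum.delta)
  finally show ?thesis .
qed




definition BF :: "real fps" where "BF = fps_X / (fps_exp 1 - 1)"

lemma E1_nz: "fps_exp (1::real) - 1 \<noteq> 0"
proof
  assume "fps_exp (1::real) - 1 = 0"
  hence "(fps_exp (1::real) - 1) $ 1 = 0" by simp
  thus False by simp
qed

lemma BF_mult: "BF * (fps_exp 1 - 1) = fps_X"
proof -
  define E1 where "E1 = fps_exp (1::real) - 1"
  have nz: "E1 \<noteq> 0" using E1_nz by (simp add: E1_def)
  have "subdegree E1 = 1" unfolding E1_def by (rule subdegreeI) auto
  then obtain q where q: "fps_X = E1 * q"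
    using subdegree_le_imp_dvd_left_divring[OF nz, of fps_X] by auto
  have "BF = (q * E1) / E1" unfolding BF_def E1_def[symmetric] q by (simp add: mult.commute)
  also have "\<dots> = q" using nz by (rule fps_divide_times_eq)
  finally show ?thesis using q by (simp add: E1_def mult.commute)
qed

lemma bernoulli_BF: "bernoulli m = fact m * BF $ m"
  by (simp add: bernoulli_def BF_def)

lemma fact_frac_aux:
  assumes "(A::real) / fact r = Y / fact (r+1)"
  shows "real (r+1) * A = Y"
proof -
  have f: "(fact (r+1)::real) = real (r+1) * fact r" by simp
  have p: "(fact r::real) \<noteq> 0" by simp
  have "A * fact (r+1) = Y * fact r" using assms p by (simp add: frac_eq_eq del: fact_Suc of_nat_Suc)
  hence "(real (r+1) * A) * fact r = Y * fact r" unfolding f by (simp add: algebra_simps del: fact_Suc of_nat_Suc)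
  thus ?thesis using p by simp
qed

lemma faulhaber0:
  "real (r+1) * (\<Sum>t<N. real t ^ r) =
     (\<Sum>i\<le>r. real ((r+1) choose i) * bernoulli i * real N ^ (r+1-i))"
proof -
  define E1 where "E1 = fps_exp (1::real) - 1"
  define S where "S = (\<Sum>t<N. fps_exp (real t))"
  have ES: "E1 * S = fps_exp (real N) - 1" unfolding S_def E1_def
  proof (induction N)
    case (Suc N)
    have "fps_exp (real (Suc N)) = fps_exp (real N) * fps_exp 1"
      by (simp add: fps_exp_add_mult[symmetric] add.commute)
    thus ?case using Suc by (simp add: algebra_simps)
  qed simp
  have "fps_X * S = BF * (fps_exp (real N) - 1)"
    using BF_mult ES by (metis E1_def mult.assoc)
  hence coef: "(fps_X * S) $ (r+1) = (BF * (fps_exp (real N) - 1)) $ (r+1)" by simp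
  have eq: "(\<Sum>t<N. real t ^ r / fact r) =
      (\<Sum>i=0..r+1. BF $ i * (fps_exp (real N) - 1) $ (r + 1 - i))"
  proof -
    have "(fps_X * S) $ (r+1) = (\<Sum>t<N. real t ^ r / fact r)" by (simp add: S_def fps_sum_nth)
    moreover have "(BF * (fps_exp (real N) - 1)) $ (r+1) =
      (\<Sum>i=0..r+1. BF $ i * (fps_exp (real N) - 1) $ (r + 1 - i))" by (rule fps_mult_nth)
    ultimately show ?thesis using coef by simp
  qed
  have "(\<Sum>i=0..r+1. BF $ i * (fps_exp (real N) - 1) $ (r + 1 - i)) =
        (\<Sum>i\<le>r. BF $ i * (real N ^ (r+1-i) / fact (r+1-i)))"
    by (subst sum.atLeast0_atMost_Suc[unfolded Suc_eq_plus1]) (auto simp: atLeast0AtMost intro!: sum.cong)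
  also have "\<dots> = (\<Sum>i\<le>r. real ((r+1) choose i) * bernoulli i * real N ^ (r+1-i)) / fact (r+1)"
    unfolding sum_divide_distrib
  proof (rule sum.cong[OF refl])
    fix i assume "i \<in> {..r}"
    hence i: "i \<le> r+1" by simp
    show "BF $ i * (real N ^ (r+1-i) / fact (r+1-i)) =
          real ((r+1) choose i) * bernoulli i * real N ^ (r+1-i) / fact (r+1)"
    proof -
      define F where "F = (fact (r+1) :: real)"
      define G where "G = (fact (r+1-i) :: real)"
      have F0: "F \<noteq> 0" and G0: "G \<noteq> 0" and I0: "(fact i :: real) \<noteq> 0" by (simp_all add: F_def G_def)
      have c: "real ((r+1) choose i) = F / (fact i * G)" using i unfolding F_def G_def by (rule binomial_fact)
      show ?thesis unfolding c bernoulli_BF F_def[symmetric] G_def[symmetric] using F0 G0 I0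
        by (simp add: field_simps)
    qed
  qed
  finally have "(\<Sum>t<N. real t ^ r) / fact r =
      (\<Sum>i\<le>r. real ((r+1) choose i) * bernoulli i * real N ^ (r+1-i)) / fact (r+1)"
    using eq by (simp add: sum_divide_distrib)
  thus ?thesis by (rule fact_frac_aux)
qed


definition negf :: "real fps \<Rightarrow> real fps" where "negf f = Abs_fps (\<lambda>n. (-1)^n * f $ n)"

lemma negf_nth [simp]: "negf f $ n = (-1)^n * f $ n" by (simp add: negf_def)

lemma negf_mult: "negf (a * b) = negf a * negf b"
proof (rule fps_ext)
  fix n
  have "negf (a*b) $ n = (\<Sum>i=0..n. (-1)^n * (a $ i * b $ (n - i)))"
    by (simp add: fps_mult_nth sum_distrib_left)
  also have "\<dots> = (\<Sum>i=0..n. ((-1)^i * a $ i) * ((-1)^(n-i) * b $ (n - i)))"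
  proof (rule sum.cong[OF refl])
    fix i assume "i \<in> {0..n}"
    hence "(-1::real)^n = (-1)^i * (-1)^(n-i)" by (simp flip: power_add)
    thus "(-1)^n * (a $ i * b $ (n - i)) = ((-1)^i * a $ i) * ((-1)^(n-i) * b $ (n - i))" by simp
  qed
  also have "\<dots> = (negf a * negf b) $ n" by (simp add: fps_mult_nth)
  finally show "negf (a*b) $ n = (negf a * negf b) $ n" .
qed

lemma negf_E1: "negf (fps_exp 1 - 1) = fps_exp (-1) - 1"
  by (rule fps_ext) (simp add: power_divide)

lemma negf_X: "negf fps_X = - fps_X"
  by (rule fps_ext) (simp add: fps_X_nth)

lemma negf_BF: "negf BF = fps_X + BF"
proof -
  define E where "E = fps_exp (1::real)"
  have inv: "fps_exp (-1) * E = (1::real fps)"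
    unfolding E_def by (simp flip: fps_exp_add_mult)
  have "negf BF * (fps_exp (-1) - 1) = - fps_X"
    using arg_cong[OF BF_mult, of negf] by (simp add: negf_mult negf_E1 negf_X)
  hence "negf BF * (fps_exp (-1) - 1) * E = - fps_X * E" by simp
  moreover have "negf BF * (1 - E) = negf BF * (fps_exp (-1) * E) - negf BF * E"
    unfolding inv by (simp add: algebra_simps)
  moreover have "negf BF * (fps_exp (-1) * E) - negf BF * E = negf BF * (fps_exp (-1) - 1) * E"
    by (simp add: algebra_simps)
  ultimately have "negf BF * (1 - E) = - fps_X * E" by simp
  hence "negf BF * (E - 1) = fps_X * (E - 1) + fps_X" by (simp add: algebra_simps)
  also have "\<dots> = (fps_X + BF) * (E - 1)" using BF_mult by (simp add: E_def algebra_simps)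
  finally have "negf BF * (E - 1) = (fps_X + BF) * (E - 1)" .
  thus ?thesis using E1_nz unfolding E_def by simp
qed

lemma bern_coeff: "(-1)^m * BF $ m = (if m = 1 then 1 else 0) + BF $ m"
  using arg_cong[OF negf_BF, of "\<lambda>f. f $ m"] by (simp add: fps_X_nth)

lemma bernoulli_odd: "odd m \<Longrightarrow> m \<noteq> 1 \<Longrightarrow> bernoulli m = 0"
  using bern_coeff[of m] by (simp add: bernoulli_BF)

lemma bernoulli_1: "bernoulli 1 = -1/2"
  using bern_coeff[of 1] by (simp add: bernoulli_BF)


lemma sum_shift_pow:
  assumes "r \<ge> 1"
  shows "(\<Sum>t=1..N. real t ^ r) = (\<Sum>t<N. real t ^ r) + real N ^ r"
proof (induction N)
  case 0 thus ?case using assms by simp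
next
  case (Suc N) thus ?case by (simp add: sum.cl_ivl_Suc)
qed

lemma even_split:
  fixes f :: "nat \<Rightarrow> real"
  assumes "\<And>i. odd i \<Longrightarrow> i \<noteq> 1 \<Longrightarrow> f i = 0" "r \<ge> 1"
  shows "(\<Sum>i\<le>r. f i) = f 1 + (\<Sum>m=0..r div 2. f (2*m))"
proof -
  have "(\<Sum>i\<le>r. f i) = (\<Sum>i\<le>r. (if even i then f i else 0) + (if i = 1 then f 1 else 0))"
    by (rule sum.cong[OF refl]) (use assms(1) in auto)
  also have "\<dots> = (\<Sum>i\<le>r. if even i then f i else 0) + f 1"
    using assms(2) by (simp add: sum.distrib)
  also have "(\<Sum>i\<le>r. if even i then f i else 0) = (\<Sum>i\<in>{i\<in>{..r}. even i}. f i)"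
    by (rule sum.inter_filter[symmetric]) simp
  also have "{i\<in>{..r}. even i} = (\<lambda>m. 2*m) ` {0..r div 2}"
  proof
    show "{i\<in>{..r}. even i} \<subseteq> (\<lambda>m. 2*m) ` {0..r div 2}"
    proof
      fix i assume "i \<in> {i\<in>{..r}. even i}"
      then obtain m where "i = 2*m" "2*m \<le> r" by auto
      thus "i \<in> (\<lambda>m. 2*m) ` {0..r div 2}" by auto
    qed
  qed auto
  also have "(\<Sum>i\<in>(\<lambda>m. 2*m) ` {0..r div 2}. f i) = (\<Sum>m=0..r div 2. f (2*m))"
    by (subst sum.reindex) (auto simp: inj_on_def)
  finally show ?thesis by simp
qed

lemma faulhaber:
  assumes "r \<ge> 1"
  shows "(\<Sum>t=1..N. real t ^ r) = real N ^ r / 2 + 1 / real (r+1) *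
     (\<Sum>m=0..r div 2. real ((r+1) choose (2*m)) * bernoulli (2*m) * real N ^ (r+1-2*m))"
proof -
  define f where "f i = real ((r+1) choose i) * bernoulli i * real N ^ (r+1-i)" for i
  have "real (r+1) * (\<Sum>t<N. real t ^ r) = (\<Sum>i\<le>r. f i)"
    unfolding f_def by (rule faulhaber0)
  also have "\<dots> = f 1 + (\<Sum>m=0..r div 2. f (2*m))"
    by (rule even_split) (use assms in \<open>auto simp: f_def bernoulli_odd\<close>)
  also have "f 1 = - real (r+1) * real N ^ r / 2"
    using bernoulli_1 by (simp add: f_def algebra_simps)
  finally have "(\<Sum>t<N. real t ^ r) = 1 / real (r+1) * (\<Sum>m=0..r div 2. f (2*m)) - real N ^ r / 2"
    by (simp add: field_simps)
  thus ?thesis using sum_shift_pow[OF assms, of N] by (simp add: f_def)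
qed




lemma lcm_pow_nat: "lcm (x::nat) y ^ a = lcm (x ^ a) (y ^ a)"
proof (cases "x = 0 \<or> y = 0")
  case True thus ?thesis by (cases a) auto
next
  case False
  hence g0: "gcd x y ^ a \<noteq> 0" by simp
  have "gcd (x^a) (y^a) * lcm (x^a) (y^a) = x^a * y^a" by (rule prod_gcd_lcm_nat[symmetric])
  also have "\<dots> = (gcd x y * lcm x y) ^ a" by (metis prod_gcd_lcm_nat power_mult_distrib)
  also have "\<dots> = gcd (x^a) (y^a) * lcm x y ^ a" by (metis gcd_exp power_mult_distrib)
  finally have "gcd (x^a) (y^a) * lcm (x^a) (y^a) = gcd (x^a) (y^a) * lcm x y ^ a" .
  moreover have "gcd (x^a) (y^a) \<noteq> 0" using False by simp
  ultimately have "lcm (x^a) (y^a) = lcm x y ^ a" by (metis mult_left_cancel)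
  thus ?thesis by simp
qed

lemma Lcm_pow_dvd:
  fixes A :: "nat set"
  assumes "finite A"
  shows "Lcm A ^ a dvd j \<longleftrightarrow> (\<forall>x\<in>A. x ^ a dvd j)"
  using assms
proof (induction A rule: finite_induct)
  case empty thus ?case by simp
next
  case (insert x A)
  thus ?case by (simp add: lcm_pow_nat)
qed

lemma prod_if_all:
  assumes "finite I"
  shows "(\<Prod>i\<in>I. if Q i then h i else (0::complex)) = (if \<forall>i\<in>I. Q i then \<Prod>i\<in>I. h i else 0)"
proof (cases "\<forall>i\<in>I. Q i")
  case True thus ?thesis by (simp cong: prod.cong)
next
  case False
  then obtain i where "i \<in> I" "\<not> Q i" by auto
  thus ?thesis using assms False by (auto intro: prod_zero)
qed

lemma sum_multiples:
  fixes Q M :: nat and F :: "nat \<Rightarrow> complex"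
  assumes "Q > 0"
  shows "(\<Sum>j=1..Q*M. if Q dvd j then F j else 0) = (\<Sum>t=1..M. F (Q*t))"
proof -
  have "(\<Sum>j=1..Q*M. if Q dvd j then F j else 0) = (\<Sum>j\<in>{j\<in>{1..Q*M}. Q dvd j}. F j)"
    by (rule sum.inter_filter[symmetric]) simp
  also have "{j\<in>{1..Q*M}. Q dvd j} = (\<lambda>t. Q*t) ` {1..M}"
  proof
    show "{j\<in>{1..Q*M}. Q dvd j} \<subseteq> (\<lambda>t. Q*t) ` {1..M}"
    proof
      fix j assume "j \<in> {j\<in>{1..Q*M}. Q dvd j}"
      then obtain t where t: "j = Q*t" "1 \<le> Q*t" "Q*t \<le> Q*M" by auto
      hence "1 \<le> t" "t \<le> M" using assms by (auto intro: gr0I)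
      thus "j \<in> (\<lambda>t. Q*t) ` {1..M}" using t by auto
    qed
    show "(\<lambda>t. Q*t) ` {1..M} \<subseteq> {j\<in>{1..Q*M}. Q dvd j}"
      using assms by auto
  qed
  also have "(\<Sum>j\<in>(\<lambda>t. Q*t) ` {1..M}. F j) = (\<Sum>t=1..M. F (Q*t))"
    by (subst sum.reindex) (use assms in \<open>auto simp: inj_on_def\<close>)
  finally show ?thesis .
qed

lemma powi_aux:
  fixes L M :: complex and a r m :: nat
  assumes "L \<noteq> 0" "M \<noteq> 0" "2*m \<le> r"
  shows "1 / (L*M)^(a*r) * (L^(a*r) * (M^a)^(r+1-2*m)) =
         L powi (int a*(2*int m - 1)) / (L*M) powi (int a*(2*int m - 1))"
proof -
  define e where "e = int a*(2*int m - 1)"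
  have h: "int (r+1-2*m) = int r + 1 - 2*int m" using assms(3) by (simp add: of_nat_diff)
  have hE: "-e = int (a*(r+1-2*m)) - int (a*r)" unfolding of_nat_mult h by (simp add: e_def algebra_simps)
  have "L powi e / (L*M) powi e = inverse (M powi e)"
    using assms by (simp add: power_int_mult_distrib field_simps)
  also have "\<dots> = M powi (-e)" by (simp add: power_int_minus)
  also have "M powi (-e) = M^(a*(r+1-2*m)) / M^(a*r)"
    using power_int_diff[of M "int (a*(r+1-2*m))" "int (a*r)"] assms(2) unfolding hE power_int_of_nat
    by blast
  also have "\<dots> = 1 / (L*M)^(a*r) * (L^(a*r) * (M^a)^(r+1-2*m))"
    using assms by (simp add: power_mult_distrib power_mult[symmetric] field_simps)
  finally show ?thesis unfolding e_def by simp
qed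


lemma distr_aux:
  fixes X Y A B :: complex
  shows "1/X*(Y*(A/2 + B*(\<Sum>m\<in>S. u m * T m))) = 1/X*(Y*A)/2 + B*(\<Sum>m\<in>S. u m*(1/X*(Y*T m)))"
proof -
  have "1/X*(Y*(B*(\<Sum>m\<in>S. u m*T m))) = B*(\<Sum>m\<in>S. u m*(1/X*(Y*T m)))"
    by (simp add: sum_distrib_left sum_divide_distrib mult_ac)
  thus ?thesis by (simp add: ring_distribs)
qed

lemma faulhaber_c:
  assumes "r \<ge> 1"
  shows "(\<Sum>t=1..N. (of_nat t::complex) ^ r) = of_nat N ^ r / 2 + 1 / of_nat (r+1) *
     (\<Sum>m=0..r div 2. of_nat ((r+1) choose (2*m)) * complex_of_real (bernoulli (2*m)) * of_nat N ^ (r+1-2*m))"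
proof -
  have "complex_of_real (\<Sum>t=1..N. real t ^ r) = complex_of_real (real N ^ r / 2 + 1 / real (r+1) *
     (\<Sum>m=0..r div 2. real ((r+1) choose (2*m)) * bernoulli (2*m) * real N ^ (r+1-2*m)))"
    using faulhaber[OF assms] by simp
  thus ?thesis by (simp add: of_real_sum)
qed

theorem mainTheorem4:
  fixes a n r :: nat and k :: "nat \<Rightarrow> nat" and g :: "nat \<Rightarrow> nat \<Rightarrow> complex"
  assumes "a \<ge> 1" "n \<ge> 1" "r \<ge> 1" "\<And>i. i \<in> {1..n} \<Longrightarrow> k i \<ge> 1"
  defines "K \<equiv> Lcm (k ` {1..n})"
  shows "(1 / of_nat K ^ (a * r)) *
      (\<Sum>j = 1..K ^ a. of_nat j ^ r *
         (\<Prod>i = 1..n. \<Sum>d | d dvd k i \<and> d ^ a dvd j. dconv (g i) moebius (k i div d)))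
    = (1/2) * (\<Prod>i = 1..n. g i (k i))
      + (1 / of_nat (r + 1)) *
        (\<Sum>m = 0..r div 2. of_nat ((r + 1) choose (2 * m)) * complex_of_real (bernoulli (2 * m))
           / (of_nat K powi (int a * (2 * int m - 1))) *
           (\<Sum>d \<in> PiE {1..n} (\<lambda>i. {e. e dvd k i}).
              of_nat (Lcm (d ` {1..n})) powi (int a * (2 * int m - 1)) *
              (\<Prod>i = 1..n. dconv (g i) moebius (k i div d i))))"
proof -
  define I where "I = {1..n}"
  define f where "f i e = dconv (g i) moebius e" for i e
  define D where "D = PiE I (\<lambda>i. {e. e dvd k i})"
  define L where "L d = Lcm (d ` I)" for d :: "nat \<Rightarrow> nat"
  define P where "P d = (\<Prod>i\<in>I. f i (k i div d i))" for d
  define E where "E m = int a * (2 * int m - 1)" for m :: nat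
  define c where "c m = of_nat ((r + 1) choose (2 * m)) * complex_of_real (bernoulli (2 * m))
           / (of_nat K powi E m)" for m
  have kpos: "\<And>i. i \<in> I \<Longrightarrow> k i > 0" using assms(4) unfolding I_def by (simp add: Suc_le_eq)
  have finI: "finite I" by (simp add: I_def)
  have finDiv: "\<And>i. i \<in> I \<Longrightarrow> finite {e. e dvd k i}" using kpos by (simp add: finite_divisors_nat)
  have finD: "finite D" unfolding D_def using finI finDiv by (intro finite_PiE) auto
  have KI: "K = Lcm (k ` I)" by (simp add: K_def I_def)
  have K0: "K > 0"
  proof -
    have "0 \<notin> k ` I" using kpos by force
    hence "K \<noteq> 0" unfolding KI using finI by (simp add: Lcm_0_iff)
    thus ?thesis by simp
  qed
  have LdvdK: "L d dvd K" if "d \<in> D" for d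
    unfolding L_def KI Lcm_dvd_iff
  proof
    fix y assume "y \<in> d ` I"
    then obtain i where i: "i \<in> I" "y = d i" by auto
    have "d i dvd k i" using that i unfolding D_def by (auto simp: PiE_iff)
    moreover have "k i dvd Lcm (k ` I)" using i by simp
    ultimately show "y dvd Lcm (k ` I)" using i by (auto intro: dvd_trans)
  qed
  have Lpos: "L d > 0" if "d \<in> D" for d
  proof -
    have "0 \<notin> d ` I"
    proof
      assume "0 \<in> d ` I"
      then obtain i where i: "i \<in> I" "d i = 0" by auto
      have "d i dvd k i" using that i unfolding D_def by (auto simp: PiE_iff)
      thus False using i kpos[OF i(1)] by simp
    qed
    hence "L d \<noteq> 0" unfolding L_def using finI by (simp add: Lcm_0_iff)
    thus ?thesis by simp
  qed
  have inner: "(\<Prod>i\<in>I. \<Sum>e | e dvd k i \<and> e ^ a dvd j. f i (k i div e)) =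
               (\<Sum>d\<in>D. if L d ^ a dvd j then P d else 0)" for j
  proof -
    have "(\<Prod>i\<in>I. \<Sum>e | e dvd k i \<and> e ^ a dvd j. f i (k i div e)) =
          (\<Prod>i\<in>I. \<Sum>e\<in>{e. e dvd k i}. if e ^ a dvd j then f i (k i div e) else 0)"
    proof (rule prod.cong[OF refl])
      fix i assume i: "i \<in> I"
      have "{e. e dvd k i \<and> e ^ a dvd j} = {e\<in>{e. e dvd k i}. e ^ a dvd j}" by auto
      thus "(\<Sum>e | e dvd k i \<and> e ^ a dvd j. f i (k i div e)) =
            (\<Sum>e\<in>{e. e dvd k i}. if e ^ a dvd j then f i (k i div e) else 0)"
        using sum.inter_filter[OF finDiv[OF i]] by simp
    qed
    also have "\<dots> = (\<Sum>d\<in>D. \<Prod>i\<in>I. if d i ^ a dvd j then f i (k i div d i) else 0)"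
      unfolding D_def by (rule prod_sum_PiE[OF finI finDiv])
    also have "\<dots> = (\<Sum>d\<in>D. if L d ^ a dvd j then P d else 0)"
    proof (rule sum.cong[OF refl])
      fix d assume "d \<in> D"
      have "(\<forall>i\<in>I. d i ^ a dvd j) \<longleftrightarrow> L d ^ a dvd j"
        unfolding L_def using Lcm_pow_dvd[of "d ` I" a j] finI by auto
      thus "(\<Prod>i\<in>I. if d i ^ a dvd j then f i (k i div d i) else 0) =
            (if L d ^ a dvd j then P d else 0)"
        by (simp add: prod_if_all[OF finI] P_def)
    qed
    finally show ?thesis .
  qed
  have swap: "(\<Sum>j = 1..K ^ a. of_nat j ^ r * (\<Sum>d\<in>D. if L d ^ a dvd j then P d else 0)) =
      (\<Sum>d\<in>D. P d * (\<Sum>j = 1..K ^ a. if L d ^ a dvd j then (of_nat j::complex) ^ r else 0))"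
  proof -
    have "(\<Sum>j = 1..K ^ a. of_nat j ^ r * (\<Sum>d\<in>D. if L d ^ a dvd j then P d else 0)) =
          (\<Sum>j = 1..K ^ a. \<Sum>d\<in>D. P d * (if L d ^ a dvd j then (of_nat j::complex) ^ r else 0))"
      unfolding sum_distrib_left by (intro sum.cong refl) simp
    also have "\<dots> = (\<Sum>d\<in>D. \<Sum>j = 1..K ^ a. P d * (if L d ^ a dvd j then (of_nat j::complex) ^ r else 0))"
      by (rule sum.swap)
    also have "\<dots> = (\<Sum>d\<in>D. P d * (\<Sum>j = 1..K ^ a. if L d ^ a dvd j then (of_nat j::complex) ^ r else 0))"
      by (simp add: sum_distrib_left)
    finally show ?thesis .
  qed
  have perd: "1 / of_nat K ^ (a * r) * (\<Sum>j = 1..K ^ a. if L d ^ a dvd j then (of_nat j::complex) ^ r else 0)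
      = 1/2 + 1 / of_nat (r+1) * (\<Sum>m=0..r div 2. c m * of_nat (L d) powi E m)" if d: "d \<in> D" for d
  proof -
    define M where "M = K div L d"
    have KLM: "K = L d * M" unfolding M_def using LdvdK[OF d] by simp
    have M0: "M > 0" using K0 KLM by (auto intro: gr0I)
    have L0: "L d > 0" using Lpos[OF d] .
    have "(\<Sum>j = 1..K ^ a. if L d ^ a dvd j then (of_nat j::complex) ^ r else 0) =
          (\<Sum>t = 1..M ^ a. (of_nat (L d ^ a * t)::complex) ^ r)"
      unfolding KLM power_mult_distrib by (rule sum_multiples) (use L0 in simp)
    also have "\<dots> = of_nat (L d) ^ (a*r) * (\<Sum>t = 1..M ^ a. (of_nat t::complex) ^ r)"
      by (simp add: sum_distrib_left power_mult_distrib power_mult)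
    also have "(\<Sum>t = 1..M ^ a. (of_nat t::complex) ^ r) = of_nat (M^a) ^ r / 2 + 1 / of_nat (r+1) *
     (\<Sum>m=0..r div 2. of_nat ((r+1) choose (2*m)) * complex_of_real (bernoulli (2*m)) * of_nat (M^a) ^ (r+1-2*m))"
      by (rule faulhaber_c[OF assms(3)])
    finally have S: "(\<Sum>j = 1..K ^ a. if L d ^ a dvd j then (of_nat j::complex) ^ r else 0) =
      of_nat (L d) ^ (a*r) * (of_nat (M^a) ^ r / 2 + 1 / of_nat (r+1) *
     (\<Sum>m=0..r div 2. of_nat ((r+1) choose (2*m)) * complex_of_real (bernoulli (2*m)) * of_nat (M^a) ^ (r+1-2*m)))" .
    define LL where "LL = (of_nat (L d) :: complex)"
    define MM where "MM = (of_nat M :: complex)"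
    have LL0: "LL \<noteq> 0" and MM0: "MM \<noteq> 0" using L0 M0 by (simp_all add: LL_def MM_def)
    have KK: "(of_nat K :: complex) = LL * MM" by (simp add: KLM LL_def MM_def)
    have "1 / of_nat K ^ (a * r) * (\<Sum>j = 1..K ^ a. if L d ^ a dvd j then (of_nat j::complex) ^ r else 0)
       = 1 / (LL*MM) ^ (a * r) * (LL ^ (a*r) * ((MM^a) ^ r / 2 + 1 / of_nat (r+1) *
         (\<Sum>m=0..r div 2. of_nat ((r+1) choose (2*m)) * complex_of_real (bernoulli (2*m)) * (MM^a) ^ (r+1-2*m))))"
      unfolding S KK by (simp add: LL_def MM_def)
    also have "\<dots> = 1 / (LL*MM) ^ (a * r) * (LL ^ (a*r) * (MM^a) ^ r) / 2 + 1 / of_nat (r+1) *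
         (\<Sum>m=0..r div 2. of_nat ((r+1) choose (2*m)) * complex_of_real (bernoulli (2*m)) *
            (1 / (LL*MM) ^ (a * r) * (LL ^ (a*r) * (MM^a) ^ (r+1-2*m))))"
      by (rule distr_aux)
    also have "1 / (LL*MM) ^ (a * r) * (LL ^ (a*r) * (MM^a) ^ r) = 1"
      using LL0 MM0 by (simp add: power_mult_distrib power_mult[symmetric] mult.commute)
    also have "(\<Sum>m=0..r div 2. of_nat ((r+1) choose (2*m)) * complex_of_real (bernoulli (2*m)) *
            (1 / (LL*MM) ^ (a * r) * (LL ^ (a*r) * (MM^a) ^ (r+1-2*m)))) =
          (\<Sum>m=0..r div 2. c m * of_nat (L d) powi E m)"
    proof (rule sum.cong[OF refl])
      fix m assume "m \<in> {0..r div 2}"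
      hence m: "2*m \<le> r" by auto
      show "of_nat ((r+1) choose (2*m)) * complex_of_real (bernoulli (2*m)) *
            (1 / (LL*MM) ^ (a * r) * (LL ^ (a*r) * (MM^a) ^ (r+1-2*m))) = c m * of_nat (L d) powi E m"
      proof -
        have p: "1 / (LL*MM) ^ (a * r) * (LL ^ (a*r) * (MM^a) ^ (r+1-2*m)) = LL powi E m / (LL*MM) powi E m"
          unfolding E_def by (rule powi_aux[OF LL0 MM0 m])
        have q: "c m * of_nat (L d) powi E m = of_nat ((r+1) choose (2*m)) * complex_of_real (bernoulli (2*m)) *
             (LL powi E m / (LL*MM) powi E m)"
          unfolding c_def KK LL_def[symmetric] by simp
        show ?thesis unfolding p q ..
      qed
    qed
    finally show ?thesis by simp
  qed
  have sumP: "(\<Sum>d\<in>D. P d) = (\<Prod>i\<in>I. g i (k i))"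
  proof -
    have "(\<Sum>d\<in>D. P d) = (\<Prod>i\<in>I. \<Sum>e\<in>{e. e dvd k i}. f i (k i div e))"
      unfolding D_def P_def by (rule prod_sum_PiE[OF finI finDiv, symmetric])
    also have "\<dots> = (\<Prod>i\<in>I. g i (k i))"
    proof (rule prod.cong[OF refl])
      fix i assume "i \<in> I"
      hence "k i \<ge> 1" using kpos by (simp add: Suc_le_eq)
      thus "(\<Sum>e\<in>{e. e dvd k i}. f i (k i div e)) = g i (k i)"
        unfolding f_def by (rule moebius_inv)
    qed
    finally show ?thesis .
  qed
  have "(1 / of_nat K ^ (a * r)) *
      (\<Sum>j = 1..K ^ a. of_nat j ^ r *
         (\<Prod>i = 1..n. \<Sum>d | d dvd k i \<and> d ^ a dvd j. dconv (g i) moebius (k i div d)))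
      = (1 / of_nat K ^ (a * r)) * (\<Sum>d\<in>D. P d * (\<Sum>j = 1..K ^ a. if L d ^ a dvd j then (of_nat j::complex) ^ r else 0))"
    unfolding swap[symmetric] inner[symmetric] by (simp add: I_def f_def)
  also have "\<dots> = (\<Sum>d\<in>D. P d * (1/2 + 1 / of_nat (r+1) * (\<Sum>m=0..r div 2. c m * of_nat (L d) powi E m)))"
  proof -
    have "(1 / of_nat K ^ (a * r)) * (\<Sum>d\<in>D. P d * (\<Sum>j = 1..K ^ a. if L d ^ a dvd j then (of_nat j::complex) ^ r else 0))
       = (\<Sum>d\<in>D. P d * ((1 / of_nat K ^ (a * r)) * (\<Sum>j = 1..K ^ a. if L d ^ a dvd j then (of_nat j::complex) ^ r else 0)))"
      unfolding sum_distrib_left[where A = D] by (rule sum.cong[OF refl]) (rule mult.left_commute)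
    also have "\<dots> = (\<Sum>d\<in>D. P d * (1/2 + 1 / of_nat (r+1) * (\<Sum>m=0..r div 2. c m * of_nat (L d) powi E m)))"
    proof (rule sum.cong[OF refl])
      fix d assume "d \<in> D"
      thus "P d * ((1 / of_nat K ^ (a * r)) * (\<Sum>j = 1..K ^ a. if L d ^ a dvd j then (of_nat j::complex) ^ r else 0))
          = P d * (1/2 + 1 / of_nat (r+1) * (\<Sum>m=0..r div 2. c m * of_nat (L d) powi E m))"
        by (simp only: perd)
    qed
    finally show ?thesis .
  qed
  also have "\<dots> = 1/2 * (\<Sum>d\<in>D. P d) + 1 / of_nat (r+1) * (\<Sum>m=0..r div 2. c m * (\<Sum>d\<in>D. of_nat (L d) powi E m * P d))"
  proof -
    have "(\<Sum>d\<in>D. P d * (1/2 + 1 / of_nat (r+1) * (\<Sum>m=0..r div 2. c m * of_nat (L d) powi E m))) =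
          (\<Sum>d\<in>D. 1/2 * P d) + (\<Sum>d\<in>D. 1 / of_nat (r+1) * (\<Sum>m=0..r div 2. c m * (of_nat (L d) powi E m * P d)))"
      by (simp add: sum.distrib[symmetric] algebra_simps sum_distrib_left sum_distrib_right)
    also have "(\<Sum>d\<in>D. 1 / of_nat (r+1) * (\<Sum>m=0..r div 2. c m * (of_nat (L d) powi E m * P d))) =
               1 / of_nat (r+1) * (\<Sum>d\<in>D. \<Sum>m=0..r div 2. c m * (of_nat (L d) powi E m * P d))"
      by (rule sum_distrib_left[symmetric])
    also have "(\<Sum>d\<in>D. \<Sum>m=0..r div 2. c m * (of_nat (L d) powi E m * P d)) =
               (\<Sum>m=0..r div 2. \<Sum>d\<in>D. c m * (of_nat (L d) powi E m * P d))"
      by (rule sum.swap)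
    also have "\<dots> = (\<Sum>m=0..r div 2. c m * (\<Sum>d\<in>D. of_nat (L d) powi E m * P d))"
      by (simp add: sum_distrib_left)
    finally show ?thesis by (simp add: sum_distrib_left[where A = D])
  qed
  also have "\<dots> = (1/2) * (\<Prod>i = 1..n. g i (k i))
      + (1 / of_nat (r + 1)) *
        (\<Sum>m = 0..r div 2. of_nat ((r + 1) choose (2 * m)) * complex_of_real (bernoulli (2 * m))
           / (of_nat K powi (int a * (2 * int m - 1))) *
           (\<Sum>d \<in> PiE {1..n} (\<lambda>i. {e. e dvd k i}).
              of_nat (Lcm (d ` {1..n})) powi (int a * (2 * int m - 1)) *
              (\<Prod>i = 1..n. dconv (g i) moebius (k i div d i))))"
    unfolding sumP by (simp add: I_def c_def E_def D_def L_def P_def f_def)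
  finally show ?thesis .
qed

end
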